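(* Let $\Gamma_1=(V_1,W_1,E_1)$ and $\Gamma_2=(V_2,W_2,E_2)$ be bipartite graphs, and let $\mathcal{E}_1\subseteq V_1\times W_1\times\mathcal{S}$ and $\mathcal{E}_2\subseteq V_2\times W_2\times\mathcal{S}$ be strong edge colorings of $\Gamma_1$ and $\Gamma_2$ respectively, with colors from the same set $\mathcal{S}$. Define $V=W_1$, $W=\{(x,u)\in V_1\times V_2 : (x,y,s)\in\mathcal{E}_1 \text{ and } (u,v,s)\in\mathcal{E}_2 \text{ for some } y\in W_1, v\in W_2, s\in\mathcal{S}\}$, $E=\{(y,(x,u))\in V\times W : (x,y,s)\in\mathcal{E}_1 \text{ and } (u,v,s)\in\mathcal{E}_2 \text{ for some } s\in\mathcal{S}, v\in W_2\}$. Then $\Gamma=(V,W,E)$ is bipartite and $$\mathcal{E}=\{(y,(x,u),(s,v)) : (x,y,s)\in\mathcal{E}_1 \text{ and } (u,v,s)\in\mathcal{E}_2\}$$ is a strong edge coloring of $\Gamma$ with colors from $\Sigma=\{(s,v)\in\mathcal{S}\times W_2 : (u,v,s)\in\mathcal{E}_2 \text{ for some } u\in V_2\}$.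
   Context: A bipartite graph is written $(V_1,W_1,E)$ with $V_1\cap W_1=\emptyset$ and $E\subseteq V_1\times W_1$. An edge coloring of it with colors from $\mathcal{S}$ is written as a triple system $\{(v,w,s)\}$ in which each edge $(v,w)\in E$ occurs with exactly one color $s$, each color of $\mathcal{S}$ is used, and two edges sharing a vertex get different colors. It is a strong edge coloring if moreover no two distinct edges of the same color are both adjacent to (share a vertex with) a common edge; equivalently, if $(v,w,s),(v',w',s)$ are distinct colored edges then $v\ne v'$, $w\neq w'$, and neither $(v,w')$ nor $(v',w)$ is an edge. *)

theory Defs
  imports Main
begin

text \<open>A bipartite graph (V, W, E): the two vertex classes live in (possibly different)
  types, so they are disjoint by construction (disjoint union); edges go from V to W.\<close>
definition bipartite :: "'a set \<Rightarrow> 'b set \<Rightarrow> ('a \<times> 'b) set \<Rightarrow> bool" where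
  "bipartite V W E \<longleftrightarrow> E \<subseteq> V \<times> W"

definition edge_coloring ::
  "'a set \<Rightarrow> 'b set \<Rightarrow> ('a \<times> 'b) set \<Rightarrow> 'c set \<Rightarrow> ('a \<times> 'b \<times> 'c) set \<Rightarrow> bool" where
  "edge_coloring V W E S C \<longleftrightarrow>
     (\<forall>v w s. (v, w, s) \<in> C \<longrightarrow> (v, w) \<in> E \<and> s \<in> S) \<and>
     (\<forall>v w. (v, w) \<in> E \<longrightarrow> (\<exists>!s. (v, w, s) \<in> C)) \<and>
     (\<forall>s \<in> S. \<exists>v w. (v, w, s) \<in> C) \<and>
     (\<forall>v w s v' w' s'. (v, w, s) \<in> C \<and> (v', w', s') \<in> C \<and> (v, w) \<noteq> (v', w')
        \<and> (v = v' \<or> w = w') \<longrightarrow> s \<noteq> s')"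

definition strong_edge_coloring ::
  "'a set \<Rightarrow> 'b set \<Rightarrow> ('a \<times> 'b) set \<Rightarrow> 'c set \<Rightarrow> ('a \<times> 'b \<times> 'c) set \<Rightarrow> bool" where
  "strong_edge_coloring V W E S C \<longleftrightarrow>
     edge_coloring V W E S C \<and>
     (\<forall>v w v' w' s. (v, w, s) \<in> C \<and> (v', w', s) \<in> C \<and> (v, w) \<noteq> (v', w') \<longrightarrow>
        v \<noteq> v' \<and> w \<noteq> w' \<and> (v, w') \<notin> E \<and> (v', w) \<notin> E)"

end

theory Submission
  imports Defs
begin

theorem lemma3p1:
  fixes V1 :: "'a set" and W1 :: "'b set" and E1 :: "('a \<times> 'b) set"
    and V2 :: "'d set" and W2 :: "'e set" and E2 :: "('d \<times> 'e) set"
    and S :: "'c set" and C1 :: "('a \<times> 'b \<times> 'c) set" and C2 :: "('d \<times> 'e \<times> 'c) set"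
  assumes "bipartite V1 W1 E1" and "bipartite V2 W2 E2"
    and "strong_edge_coloring V1 W1 E1 S C1"
    and "strong_edge_coloring V2 W2 E2 S C2"
  defines "V \<equiv> W1"
    and "W \<equiv> {(x, u) \<in> V1 \<times> V2. \<exists>y \<in> W1. \<exists>v \<in> W2. \<exists>s \<in> S. (x, y, s) \<in> C1 \<and> (u, v, s) \<in> C2}"
    and "E \<equiv> {(y, (x, u)) \<in> W1 \<times> {(x, u) \<in> V1 \<times> V2. \<exists>y \<in> W1. \<exists>v \<in> W2. \<exists>s \<in> S. (x, y, s) \<in> C1 \<and> (u, v, s) \<in> C2}.
          \<exists>s \<in> S. \<exists>v \<in> W2. (x, y, s) \<in> C1 \<and> (u, v, s) \<in> C2}"
    and "C \<equiv> {(y, (x, u), (s, v)). (x, y, s) \<in> C1 \<and> (u, v, s) \<in> C2}"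
    and "\<Sigma> \<equiv> {(s, v) \<in> S \<times> W2. \<exists>u \<in> V2. (u, v, s) \<in> C2}"
  shows "bipartite V W E \<and> strong_edge_coloring V W E \<Sigma> C"
proof -
  note b1 = assms(1)[unfolded bipartite_def] and b2 = assms(2)[unfolded bipartite_def]
  note c1 = assms(3)[unfolded strong_edge_coloring_def edge_coloring_def]
  note c2 = assms(4)[unfolded strong_edge_coloring_def edge_coloring_def]
  note c1a = c1[THEN conjunct1, THEN conjunct1]
  note c1b = c1[THEN conjunct1, THEN conjunct2, THEN conjunct1]
  note c1c = c1[THEN conjunct1, THEN conjunct2, THEN conjunct2, THEN conjunct1]
  note c1d = c1[THEN conjunct1, THEN conjunct2, THEN conjunct2, THEN conjunct2]
  note c1e = c1[THEN conjunct2]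
  note c2a = c2[THEN conjunct1, THEN conjunct1]
  note c2d = c2[THEN conjunct1, THEN conjunct2, THEN conjunct2, THEN conjunct2]
  note c2e = c2[THEN conjunct2]
  have C1E: "\<And>x y s. (x,y,s) \<in> C1 \<Longrightarrow> (x,y) \<in> E1 \<and> s \<in> S \<and> x \<in> V1 \<and> y \<in> W1"
  proof -
    fix x y s assume "(x,y,s) \<in> C1"
    then have "(x,y) \<in> E1 \<and> s \<in> S" using c1a by blast
    then show "(x,y) \<in> E1 \<and> s \<in> S \<and> x \<in> V1 \<and> y \<in> W1" using b1 by blast
  qed
  have C2E: "\<And>x y s. (x,y,s) \<in> C2 \<Longrightarrow> (x,y) \<in> E2 \<and> s \<in> S \<and> x \<in> V2 \<and> y \<in> W2"
  proof -
    fix x y s assume "(x,y,s) \<in> C2"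
    then have "(x,y) \<in> E2 \<and> s \<in> S" using c2a by blast
    then show "(x,y) \<in> E2 \<and> s \<in> S \<and> x \<in> V2 \<and> y \<in> W2" using b2 by blast
  qed
  have u1: "\<And>x y s s'. (x,y,s) \<in> C1 \<Longrightarrow> (x,y,s') \<in> C1 \<Longrightarrow> s = s'"
  proof -
    fix x y s s' assume h: "(x,y,s) \<in> C1" "(x,y,s') \<in> C1"
    then have "(x,y) \<in> E1" using C1E by blast
    then have "\<exists>!s. (x,y,s) \<in> C1" using c1b by blast
    then show "s = s'" using h by blast
  qed
  have p2: "\<And>u v v' s. (u,v,s) \<in> C2 \<Longrightarrow> (u,v',s) \<in> C2 \<Longrightarrow> v = v'"
  proof (rule ccontr)
    fix u v v' s assume h: "(u,v,s) \<in> C2" "(u,v',s) \<in> C2" "v \<noteq> v'"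
    then show False using c2d[rule_format, of u v s u v' s] by blast
  qed
  have q2: "\<And>u u' v s. (u,v,s) \<in> C2 \<Longrightarrow> (u',v,s) \<in> C2 \<Longrightarrow> u = u'"
  proof (rule ccontr)
    fix u u' v s assume h: "(u,v,s) \<in> C2" "(u',v,s) \<in> C2" "u \<noteq> u'"
    then show False using c2d[rule_format, of u v s u' v s] by blast
  qed
  have st1: "\<And>x y x' y' s. (x,y,s) \<in> C1 \<Longrightarrow> (x',y',s) \<in> C1 \<Longrightarrow> (x,y) \<noteq> (x',y') \<Longrightarrow>
      x \<noteq> x' \<and> y \<noteq> y' \<and> (x,y') \<notin> E1 \<and> (x',y) \<notin> E1"
    using c1e by blast
  have Eiff: "\<And>y x u. (y,(x,u)) \<in> E \<longleftrightarrow> (\<exists>s v. (x,y,s) \<in> C1 \<and> (u,v,s) \<in> C2)"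
    unfolding E_def using C1E C2E by blast
  have bip: "bipartite V W E" unfolding bipartite_def V_def W_def E_def by blast
  have a1: "\<forall>v w s. (v, w, s) \<in> C \<longrightarrow> (v, w) \<in> E \<and> s \<in> \<Sigma>"
    unfolding C_def \<Sigma>_def using Eiff C2E by blast
  have a2: "\<forall>v w. (v, w) \<in> E \<longrightarrow> (\<exists>!s. (v, w, s) \<in> C)"
  proof (intro allI impI)
    fix y w assume "(y,w) \<in> E"
    obtain x u where w: "w = (x,u)" by (cases w)
    from \<open>(y,w) \<in> E\<close> obtain s v where sv: "(x,y,s) \<in> C1" "(u,v,s) \<in> C2" using Eiff w by blast
    show "\<exists>!c. (y, w, c) \<in> C"
    proof
      show "(y,w,(s,v)) \<in> C" using sv w unfolding C_def by blast
    next
      fix c assume "(y,w,c) \<in> C"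
      then obtain s' v' where "c = (s',v')" "(x,y,s') \<in> C1" "(u,v',s') \<in> C2" using w unfolding C_def by blast
      then show "c = (s,v)" using u1 p2 sv by metis
    qed
  qed
  have a3: "\<forall>c \<in> \<Sigma>. \<exists>v w. (v, w, c) \<in> C"
  proof
    fix c assume "c \<in> \<Sigma>"
    then obtain s v u where c: "c = (s,v)" "(u,v,s) \<in> C2" "s \<in> S" unfolding \<Sigma>_def by blast
    then obtain x y where "(x,y,s) \<in> C1" using c1c by blast
    then show "\<exists>v w. (v, w, c) \<in> C" using c unfolding C_def by blast
  qed
  have key: "\<And>y x u c y' x' u'. (y,(x,u),c) \<in> C \<Longrightarrow> (y',(x',u'),c) \<in> C \<Longrightarrow> (y,(x,u)) \<noteq> (y',(x',u')) \<Longrightarrow>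
      u = u' \<and> x \<noteq> x' \<and> y \<noteq> y' \<and> (x,y') \<notin> E1 \<and> (x',y) \<notin> E1"
  proof -
    fix y x u c y' x' u'
    assume h: "(y,(x,u),c) \<in> C" "(y',(x',u'),c) \<in> C" "(y,(x,u)) \<noteq> (y',(x',u'))"
    then obtain s v where sv: "c = (s,v)" "(x,y,s) \<in> C1" "(u,v,s) \<in> C2" "(x',y',s) \<in> C1" "(u',v,s) \<in> C2"
      unfolding C_def by auto
    have "u = u'" using q2 sv by blast
    then have "(x,y) \<noteq> (x',y')" using h by auto
    then show "u = u' \<and> x \<noteq> x' \<and> y \<noteq> y' \<and> (x,y') \<notin> E1 \<and> (x',y) \<notin> E1" using st1 sv \<open>u = u'\<close> by blast
  qed
  have a4: "\<forall>v w s v' w' s'. (v, w, s) \<in> C \<and> (v', w', s') \<in> C \<and> (v, w) \<noteq> (v', w')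
        \<and> (v = v' \<or> w = w') \<longrightarrow> s \<noteq> s'"
    using key by fastforce
  have a5: "\<forall>v w v' w' s. (v, w, s) \<in> C \<and> (v', w', s) \<in> C \<and> (v, w) \<noteq> (v', w') \<longrightarrow>
        v \<noteq> v' \<and> w \<noteq> w' \<and> (v, w') \<notin> E \<and> (v', w) \<notin> E"
  proof (intro allI impI)
    fix y w y' w' c
    assume h: "(y, w, c) \<in> C \<and> (y', w', c) \<in> C \<and> (y, w) \<noteq> (y', w')"
    obtain x u where w: "w = (x,u)" by (cases w)
    obtain x' u' where w': "w' = (x',u')" by (cases w')
    have k: "u = u' \<and> x \<noteq> x' \<and> y \<noteq> y' \<and> (x,y') \<notin> E1 \<and> (x',y) \<notin> E1" using key h w w' by blast
    have "(y, w') \<notin> E" using Eiff w' C1E k by blast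
    moreover have "(y', w) \<notin> E" using Eiff w C1E k by blast
    ultimately show "y \<noteq> y' \<and> w \<noteq> w' \<and> (y, w') \<notin> E \<and> (y', w) \<notin> E" using k w w' by auto
  qed
  show ?thesis unfolding strong_edge_coloring_def edge_coloring_def
    using bip a1 a2 a3 a4 a5 by (intro conjI)
qed

end
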